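(* If $L\subseteq\Sigma^\omega$ is RPBA-recognizable, then there are finitely many Parikh-recognizable languages $U_1,\dots,U_n\subseteq\Sigma^*$ and regular languages $V_1,\dots,V_n\subseteq\Sigma^*$ with $L=\bigcup_{i=1}^nU_iV_i^\omega$.
   Context: For $V\subseteq\Sigma^*$, $V^\omega=\{w_1w_2\cdots\mid w_i\in V\setminus\{\varepsilon\}\}$. A semi-linear set in $\mathbb{N}^d$ is a finite union of sets $\{b_0+\sum_{j=1}^\ell b_jz_j\mid z_j\in\mathbb{N}\}$ with $b_j\in\mathbb{N}^d$. A Parikh automaton (PA) of dimension $d$ is $(Q,\Sigma,q_0,\Delta,F,C)$ with finite $Q$, $q_0\in Q$, $F\subseteq Q$, finite $\Delta\subseteq Q\times\Sigma\times\mathbb{N}^d\times Q$, semi-linear $C\subseteq\mathbb{N}^d$; it accepts a finite word $x_1\cdots x_n$ if there is a run $r_i=(p_{i-1},x_i,\mathbf{v}_i,p_i)\in\Delta$, $p_0=q_0$, with $p_n\in F$ and $\sum_i\mathbf{v}_i\in C$; Parikh-recognizable languages are those accepted by PA. A reachability Parikh–Büchi automaton (RPBA) is a PA read on infinite words: a run $r_1r_2\cdots$ ($r_i=(p_{i-1},\alpha_i,\mathbf{v}_i,p_i)\in\Delta$, $p_0=q_0$) is accepting if there is $i\ge1$ with $p_i\in F$ and $\sum_{k\le i}\mathbf{v}_k\in C$, and there are infinitely many $j$ with $p_j\in F$. $L$ is RPBA-recognizable if it is the set of infinite words with an accepting run of some RPBA. *)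

theory Defs
  imports Main
begin

text \<open>Finite words are lists; infinite words are functions nat => 'a.
  Vectors in N^d are nat lists of length d.\<close>

type_synonym 'a oword = "nat \<Rightarrow> 'a"

definition vadd :: "nat list \<Rightarrow> nat list \<Rightarrow> nat list" where
  "vadd u v = map2 (+) u v"

definition smult :: "nat \<Rightarrow> nat list \<Rightarrow> nat list" where
  "smult k v = map ((*) k) v"

definition vsum :: "nat \<Rightarrow> nat list list \<Rightarrow> nat list" where
  "vsum d vs = foldr vadd vs (replicate d 0)"

definition linear_set :: "nat \<Rightarrow> nat list \<Rightarrow> nat list list \<Rightarrow> nat list set" where
  "linear_set d b0 Ps =
     {vadd b0 (vsum d (map2 smult zs Ps)) | zs. length zs = length Ps}"

definition semilinear :: "nat \<Rightarrow> nat list set \<Rightarrow> bool" where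
  "semilinear d C \<longleftrightarrow>
     (\<exists>S. finite S \<and>
        (\<forall>(b0, Ps) \<in> S. length b0 = d \<and> (\<forall>p \<in> set Ps. length p = d)) \<and>
        C = (\<Union>(b0, Ps) \<in> S. linear_set d b0 Ps))"

record 'a pa =
  pa_dim    :: nat
  pa_states :: "nat set"
  pa_init   :: nat
  pa_trans  :: "(nat \<times> 'a \<times> nat list \<times> nat) set"
  pa_final  :: "nat set"
  pa_constr :: "nat list set"

definition wf_pa :: "'a pa \<Rightarrow> bool" where
  "wf_pa A \<longleftrightarrow>
     finite (pa_states A) \<and> pa_init A \<in> pa_states A \<and>
     pa_final A \<subseteq> pa_states A \<and> finite (pa_trans A) \<and>
     (\<forall>(p, a, v, q) \<in> pa_trans A. p \<in> pa_states A \<and> q \<in> pa_states A \<and> length v = pa_dim A) \<and>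
     semilinear (pa_dim A) (pa_constr A)"

definition pa_accepts :: "'a pa \<Rightarrow> 'a list \<Rightarrow> bool" where
  "pa_accepts A w \<longleftrightarrow>
     (\<exists>p vs. p 0 = pa_init A \<and>
        (\<forall>i < length w. (p i, w ! i, vs i, p (Suc i)) \<in> pa_trans A) \<and>
        p (length w) \<in> pa_final A \<and>
        vsum (pa_dim A) (map vs [0..<length w]) \<in> pa_constr A)"

definition pa_lang :: "'a pa \<Rightarrow> 'a list set" where
  "pa_lang A = {w. pa_accepts A w}"

definition parikh_recognizable :: "'a list set \<Rightarrow> bool" where
  "parikh_recognizable U \<longleftrightarrow> (\<exists>A. wf_pa A \<and> pa_lang A = U)"

definition rpba_accepts :: "'a pa \<Rightarrow> 'a oword \<Rightarrow> bool" where
  "rpba_accepts A \<alpha> \<longleftrightarrow>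
     (\<exists>p vs. p 0 = pa_init A \<and>
        (\<forall>i. (p i, \<alpha> i, vs i, p (Suc i)) \<in> pa_trans A) \<and>
        (\<exists>i \<ge> 1. p i \<in> pa_final A \<and> vsum (pa_dim A) (map vs [0..<i]) \<in> pa_constr A) \<and>
        (\<exists>\<^sub>\<infinity>j. p j \<in> pa_final A))"

definition rpba_lang :: "'a pa \<Rightarrow> 'a oword set" where
  "rpba_lang A = {\<alpha>. rpba_accepts A \<alpha>}"

definition rpba_recognizable :: "'a oword set \<Rightarrow> bool" where
  "rpba_recognizable L \<longleftrightarrow> (\<exists>A. wf_pa A \<and> rpba_lang A = L)"

definition regular :: "'a list set \<Rightarrow> bool" where
  "regular V \<longleftrightarrow>
     (\<exists>(Q :: nat set) q0 (\<delta> :: (nat \<times> 'a \<times> nat) set) F.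
        finite Q \<and> q0 \<in> Q \<and> F \<subseteq> Q \<and> finite \<delta> \<and>
        (\<forall>(p, a, q) \<in> \<delta>. p \<in> Q \<and> q \<in> Q) \<and>
        V = {w. \<exists>p. p 0 = q0 \<and> (\<forall>i < length w. (p i, w ! i, p (Suc i)) \<in> \<delta>) \<and>
                    p (length w) \<in> F})"

text \<open>V^omega = { w1 w2 ... | w_i in V - {epsilon} }.\<close>
definition omega_iter :: "'a list set \<Rightarrow> 'a oword set" where
  "omega_iter V =
     {\<alpha>. \<exists>ws :: nat \<Rightarrow> 'a list. (\<forall>i. ws i \<in> V \<and> ws i \<noteq> []) \<and>
        (\<forall>n. map \<alpha> [0..<sum_list (map (length \<circ> ws) [0..<n])] = concat (map ws [0..<n]))}"

definition conc_ow :: "'a list \<Rightarrow> 'a oword \<Rightarrow> 'a oword" where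
  "conc_ow u \<alpha> = (\<lambda>n. if n < length u then u ! n else \<alpha> (n - length u))"

definition lang_conc :: "'a list set \<Rightarrow> 'a oword set \<Rightarrow> 'a oword set" where
  "lang_conc U W = {conc_ow u \<alpha> | u \<alpha>. u \<in> U \<and> \<alpha> \<in> W}"

end

theory Submission
  imports Defs "HOL-Library.Infinite_Set"
begin

definition phT :: "'a pa \<Rightarrow> (nat \<times> 'a \<times> nat list \<times> nat) set" where
  "phT A = (\<lambda>(p,a,v,q). (2*p, a, v, 2*q)) ` pa_trans A
         \<union> (\<lambda>(p,a,v,q). (2*p, a, v, 2*q+1)) ` {t \<in> pa_trans A. snd (snd (snd t)) \<in> pa_final A}
         \<union> (\<lambda>(p,a,v,q). (2*p+1, a, replicate (pa_dim A) 0, 2*q+1)) ` pa_trans A"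

lemma phT_iff:
  "(x,a,w,y) \<in> phT A \<longleftrightarrow> (\<exists>p v q. (p,a,v,q) \<in> pa_trans A \<and>
      ((x = 2*p \<and> w = v \<and> y = 2*q) \<or> (x = 2*p \<and> w = v \<and> y = 2*q+1 \<and> q \<in> pa_final A)
       \<or> (x = 2*p+1 \<and> w = replicate (pa_dim A) 0 \<and> y = 2*q+1)))"
  unfolding phT_def by (auto simp: image_iff; force)

lemma phT_I1: "(p,a,v,q) \<in> pa_trans A \<Longrightarrow> (2*p,a,v,2*q) \<in> phT A"
  unfolding phT_def by (rule UnI1, rule UnI1) (rule image_eqI[where x="(p,a,v,q)"], auto)

lemma phT_I2: "(p,a,v,q) \<in> pa_trans A \<Longrightarrow> q \<in> pa_final A \<Longrightarrow> (2*p,a,v,2*q+1) \<in> phT A"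
  unfolding phT_def by (rule UnI1, rule UnI2) (rule image_eqI[where x="(p,a,v,q)"], auto)

lemma phT_I3: "(p,a,v,q) \<in> pa_trans A \<Longrightarrow> (2*p+1,a,replicate (pa_dim A) 0,2*q+1) \<in> phT A"
  unfolding phT_def by (rule UnI2) (rule image_eqI[where x="(p,a,v,q)"], auto)

definition phA :: "'a pa \<Rightarrow> nat \<Rightarrow> 'a pa" where
  "phA A f = \<lparr>pa_dim = pa_dim A,
     pa_states = (\<lambda>p. 2*p) ` pa_states A \<union> (\<lambda>p. 2*p+1) ` pa_states A,
     pa_init = 2 * pa_init A, pa_trans = phT A,
     pa_final = (if f \<in> pa_final A then {2*f+1} else {}),
     pa_constr = pa_constr A\<rparr>"

definition Vl :: "'a pa \<Rightarrow> nat \<Rightarrow> 'a list set" where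
  "Vl A f = {w. \<exists>p. p 0 = f \<and> (\<forall>i<length w. \<exists>v. (p i, w!i, v, p (Suc i)) \<in> pa_trans A)
                   \<and> p (length w) = f}"

lemma upt_split: "i \<le> j \<Longrightarrow> j \<le> k \<Longrightarrow> [i..<k] = [i..<j] @ [j..<k]"
  using upt_add_eq_append[of i j "k - j"] by simp

lemma vsum_zeros: "vsum d (xs @ replicate m (replicate d 0)) = vsum d xs"
proof -
  have "foldr vadd (replicate m (replicate d 0)) (replicate d 0) = replicate d 0"
    by (induction m) (auto simp: vadd_def zip_replicate)
  then show ?thesis unfolding vsum_def by simp
qed

lemma phA_trans: "pa_trans (phA A f) = phT A" by (simp add: phA_def)

lemma wf_phA:
  assumes wf: "wf_pa A" shows "wf_pa (phA A f)"
proof -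
  have T: "\<And>p a v q. (p,a,v,q) \<in> pa_trans A \<Longrightarrow> p \<in> pa_states A \<and> q \<in> pa_states A \<and> length v = pa_dim A"
    using wf unfolding wf_pa_def by blast
  have T2: "x \<in> pa_states (phA A f) \<and> y \<in> pa_states (phA A f) \<and> length w = pa_dim (phA A f)"
    if xin: "(x,a,w,y) \<in> phT A" for x a w y
  proof -
    obtain p v q where pq: "(p,a,v,q) \<in> pa_trans A" and
      c: "(x = 2*p \<and> w = v \<and> y = 2*q) \<or> (x = 2*p \<and> w = v \<and> y = 2*q+1 \<and> q \<in> pa_final A)
       \<or> (x = 2*p+1 \<and> w = replicate (pa_dim A) 0 \<and> y = 2*q+1)"
      using xin unfolding phT_iff by blast
    have "p \<in> pa_states A" "q \<in> pa_states A" "length v = pa_dim A" using T[OF pq] by auto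
    then show ?thesis using c unfolding phA_def by auto
  qed
  have fin: "finite (phT A)" using wf unfolding wf_pa_def phT_def by simp
  show ?thesis
    unfolding wf_pa_def
  proof (intro conjI)
    show "finite (pa_states (phA A f))" using wf unfolding wf_pa_def phA_def by simp
    show "pa_init (phA A f) \<in> pa_states (phA A f)" using wf unfolding wf_pa_def phA_def by simp
    show "pa_final (phA A f) \<subseteq> pa_states (phA A f)" using wf unfolding wf_pa_def phA_def by auto
    show "finite (pa_trans (phA A f))" using fin by (simp add: phA_def)
    show "\<forall>(p, a, v, q)\<in>pa_trans (phA A f). p \<in> pa_states (phA A f) \<and> q \<in> pa_states (phA A f) \<and> length v = pa_dim (phA A f)"
      unfolding phA_trans using T2 by blast
    show "semilinear (pa_dim (phA A f)) (pa_constr (phA A f))" using wf unfolding wf_pa_def phA_def by simp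
  qed
qed

lemma regular_Vl: "wf_pa A \<Longrightarrow> regular (Vl A f)"
proof -
  assume wf: "wf_pa A"
  define \<delta> where "\<delta> = (\<lambda>(p,a,v,q). (p,a,q)) ` pa_trans A"
  have d: "(p,a,q) \<in> \<delta> \<longleftrightarrow> (\<exists>v. (p,a,v,q) \<in> pa_trans A)" for p a q
    unfolding \<delta>_def by (auto simp: image_iff) force
  show ?thesis unfolding regular_def
    apply (rule exI[of _ "insert f (pa_states A)"], rule exI[of _ f], rule exI[of _ \<delta>], rule exI[of _ "{f}"])
    using wf unfolding wf_pa_def Vl_def
    apply (auto simp: d)
    unfolding \<delta>_def by blast
qed

lemma dirA:
  assumes wf: "wf_pa A" and acc: "rpba_accepts A \<alpha>"
  shows "\<exists>f \<in> pa_final A. \<alpha> \<in> lang_conc (pa_lang (phA A f)) (omega_iter (Vl A f))"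
proof -
  obtain p vs i where p0: "p 0 = pa_init A"
    and tr: "\<And>k. (p k, \<alpha> k, vs k, p (Suc k)) \<in> pa_trans A"
    and i1: "i \<ge> 1" and piF: "p i \<in> pa_final A"
    and sumC: "vsum (pa_dim A) (map vs [0..<i]) \<in> pa_constr A"
    and inf: "\<exists>\<^sub>\<infinity>j. p j \<in> pa_final A"
    using acc unfolding rpba_accepts_def by blast
  have finF: "finite (pa_final A)" using wf unfolding wf_pa_def by (meson finite_subset)
  have "infinite {j. p j \<in> pa_final A}" using inf by (simp add: Inf_many_def)
  moreover have "finite (p ` {j. p j \<in> pa_final A})"
    by (rule finite_subset[OF _ finF]) auto
  ultimately have "\<exists>a0\<in>{j. p j \<in> pa_final A}. infinite {a \<in> {j. p j \<in> pa_final A}. p a = p a0}"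
    by (rule pigeonhole_infinite)
  then obtain a0 where "a0 \<in> {j. p j \<in> pa_final A}"
    and inf0: "infinite {a \<in> {j. p j \<in> pa_final A}. p a = p a0}"
    by blast
  define f where "f = p a0"
  have fF: "f \<in> pa_final A" using \<open>a0 \<in> _\<close> f_def by simp
  define J where "J = {j. i \<le> j \<and> p j = f}"
  have "J = {a \<in> {j. p j \<in> pa_final A}. p a = p a0} - {..<i}"
    using \<open>a0 \<in> _\<close> unfolding J_def f_def by auto
  hence infJ: "infinite J" using inf0 by (simp add: Diff_infinite_finite)
  define jj where "jj = enumerate J"
  have jjJ: "jj k \<in> J" for k by (simp add: jj_def enumerate_in_set infJ)
  have jjmono: "m < n \<Longrightarrow> jj m < jj n" for m n by (simp add: jj_def enumerate_mono infJ)
  have jjle: "m \<le> n \<Longrightarrow> jj m \<le> jj n" for m n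
    using jjmono[of m n] by (cases "m = n") auto
  define u where "u = map \<alpha> [0..<jj 0]"
  define \<beta> where "\<beta> = (\<lambda>n. \<alpha> (n + jj 0))"
  define ws where "ws = (\<lambda>k. map \<alpha> [jj k..<jj (Suc k)])"
  have ij0: "i \<le> jj 0" and pj: "p (jj k) = f" for k using jjJ[of 0] jjJ[of k] by (auto simp: J_def)
  have uacc: "u \<in> pa_lang (phA A f)"
  proof -
    define p' where "p' = (\<lambda>k. if k < i then 2 * p k else 2 * p k + 1)"
    define vs' where "vs' = (\<lambda>k. if k < i then vs k else replicate (pa_dim A) 0)"
    have "p' 0 = pa_init (phA A f)" using i1 p0 by (simp add: p'_def phA_def)
    moreover have "(p' k, u ! k, vs' k, p' (Suc k)) \<in> pa_trans (phA A f)" if "k < length u" for k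
    proof -
      have uk: "u ! k = \<alpha> k" using that by (simp add: u_def)
      show ?thesis
      proof (cases "Suc k < i")
        case True then show ?thesis
          by (simp add: phA_def p'_def vs'_def uk phT_I1 tr)
      next
        case False
        show ?thesis
        proof (cases "Suc k = i")
          case True then show ?thesis
            using phT_I2[OF tr[of k]] piF by (simp add: phA_def p'_def vs'_def uk)
        next
          case False
          then show ?thesis using \<open>\<not> Suc k < i\<close> phT_I3[OF tr[of k]]
            by (simp add: phA_def p'_def vs'_def uk)
        qed
      qed
    qed
    moreover have "p' (length u) \<in> pa_final (phA A f)"
      using ij0 pj[of 0] fF by (simp add: u_def p'_def phA_def)
    moreover have "vsum (pa_dim (phA A f)) (map vs' [0..<length u]) \<in> pa_constr (phA A f)"
    proof -
      have "[0..<jj 0] = [0..<i] @ [i..<jj 0]" using ij0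
        by (intro upt_split) simp
      moreover have "map vs' [i..<jj 0] = replicate (jj 0 - i) (replicate (pa_dim A) 0)"
        by (rule nth_equalityI) (auto simp: vs'_def)
      moreover have "map vs' [0..<i] = map vs [0..<i]" by (simp add: vs'_def)
      ultimately have "map vs' [0..<jj 0] = map vs [0..<i] @ replicate (jj 0 - i) (replicate (pa_dim A) 0)"
        by simp
      then show ?thesis using sumC vsum_zeros by (simp add: u_def phA_def)
    qed
    ultimately show ?thesis unfolding pa_lang_def pa_accepts_def by blast
  qed
  have lens: "sum_list (map (length \<circ> ws) [0..<n]) = jj n - jj 0" for n
  proof (induction n)
    case 0 then show ?case by simp
  next
    case (Suc n) then show ?case using jjle[of 0 n] jjle[of n "Suc n"] by (simp add: ws_def)
  qed
  have conc: "concat (map ws [0..<n]) = map \<alpha> [jj 0..<jj n]" for n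
  proof (induction n)
    case 0 then show ?case by simp
  next
    case (Suc n)
    have "[jj 0..<jj (Suc n)] = [jj 0..<jj n] @ [jj n..<jj (Suc n)]"
      by (intro upt_split jjle) simp_all
    then show ?case using Suc.IH by (simp add: ws_def)
  qed
  have "\<beta> \<in> omega_iter (Vl A f)"
    unfolding omega_iter_def
  proof (intro CollectI exI[of _ ws] conjI allI)
    fix k
    show "ws k \<noteq> []" using jjmono[of k "Suc k"] by (simp add: ws_def)
    show "ws k \<in> Vl A f"
      unfolding Vl_def
    proof (intro CollectI exI[of _ "\<lambda>t. p (jj k + t)"] conjI allI impI)
      fix t assume "t < length (ws k)"
      hence "ws k ! t = \<alpha> (jj k + t)" by (simp add: ws_def)
      then show "\<exists>v. (p (jj k + t), ws k ! t, v, p (jj k + Suc t)) \<in> pa_trans A"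
        using tr[of "jj k + t"] by auto
    next
      show "p (jj k + 0) = f" using pj by simp
      show "p (jj k + length (ws k)) = f" using pj[of "Suc k"] jjle[of k "Suc k"] by (simp add: ws_def)
    qed
  next
    fix n
    show "map \<beta> [0..<sum_list (map (length \<circ> ws) [0..<n])] = concat (map ws [0..<n])"
      unfolding lens conc using jjle[of 0 n]
      by (intro nth_equalityI) (auto simp: \<beta>_def add.commute)
  qed
  moreover have "\<alpha> = conc_ow u \<beta>"
    by (rule ext) (simp add: conc_ow_def u_def \<beta>_def)
  ultimately show ?thesis using uacc fF unfolding lang_conc_def by blast
qed

lemma dirB:
  assumes wf: "wf_pa A" and mem: "\<alpha> \<in> lang_conc (pa_lang (phA A f)) (omega_iter (Vl A f))"
  shows "rpba_accepts A \<alpha>"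
proof -
  obtain u \<beta> where adef: "\<alpha> = conc_ow u \<beta>" and uacc: "pa_accepts (phA A f) u"
    and bom: "\<beta> \<in> omega_iter (Vl A f)"
    using mem unfolding lang_conc_def pa_lang_def by blast
  define d where "d = pa_dim A"
  obtain p' vs' where p'0: "p' 0 = 2 * pa_init A"
    and trp: "\<And>k. k < length u \<Longrightarrow> (p' k, u ! k, vs' k, p' (Suc k)) \<in> phT A"
    and p'fin: "p' (length u) \<in> (if f \<in> pa_final A then {2*f+1} else {})"
    and sumC: "vsum d (map vs' [0..<length u]) \<in> pa_constr A"
    using uacc unfolding pa_accepts_def phA_def d_def by auto
  have fF: "f \<in> pa_final A" and p'u: "p' (length u) = 2*f+1" using p'fin by (auto split: if_splits)
  obtain ws where wsV: "\<And>k. ws k \<in> Vl A f" and wsne: "\<And>k. ws k \<noteq> []"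
    and wsc: "\<And>n. map \<beta> [0..<sum_list (map (length \<circ> ws) [0..<n])] = concat (map ws [0..<n])"
    using bom unfolding omega_iter_def by blast
  have step: "\<exists>v. (p' k div 2, u!k, v, p' (Suc k) div 2) \<in> pa_trans A" if "k < length u" for k
    using trp[OF that] unfolding phT_iff by auto
  have step_even: "(p' k div 2, u!k, vs' k, p' (Suc k) div 2) \<in> pa_trans A"
    if "k < length u" "even (p' k)" for k
    using trp[OF that(1)] that(2) unfolding phT_iff by auto
  have step_odd: "odd (p' (Suc k)) \<and> vs' k = replicate d 0" if "k < length u" "odd (p' k)" for k
    using trp[OF that(1)] that(2) unfolding phT_iff d_def by auto
  have step_sw: "p' (Suc k) div 2 \<in> pa_final A"
    if "k < length u" "even (p' k)" "odd (p' (Suc k))" for k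
    using trp[OF that(1)] that(2,3) unfolding phT_iff by auto
  define i where "i = (LEAST k. odd (p' k))"
  have oddu: "odd (p' (length u))" using p'u by simp
  have iodd: "odd (p' i)" unfolding i_def using oddu by (rule LeastI)
  have ile: "i \<le> length u" unfolding i_def using oddu by (rule Least_le)
  have ieven: "even (p' k)" if "k < i" for k using not_less_Least[OF that[unfolded i_def]] by simp
  have i0: "i \<noteq> 0"
  proof
    assume "i = 0" then show False using iodd p'0 by simp
  qed
  have oddafter: "odd (p' k)" if "i \<le> k" "k \<le> length u" for k
    using that
  proof (induction k)
    case 0 then show ?case using iodd by simp
  next
    case (Suc k)
    show ?case
    proof (cases "i = Suc k")
      case True then show ?thesis using iodd by simp
    next
      case False
      then have "i \<le> k" "k < length u" using Suc.prems by auto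
      then show ?thesis using Suc.IH step_odd by auto
    qed
  qed
  have zero_after: "vs' k = replicate d 0" if "i \<le> k" "k < length u" for k
    using step_odd[of k] oddafter[of k] that by auto
  define p0 where "p0 = (\<lambda>k. p' k div 2)"
  define vu where "vu = (\<lambda>k. if k < i then vs' k else (SOME v. (p0 k, u!k, v, p0 (Suc k)) \<in> pa_trans A))"
  have tru: "(p0 k, u!k, vu k, p0 (Suc k)) \<in> pa_trans A" if "k < length u" for k
  proof (cases "k < i")
    case True then show ?thesis using step_even[OF that ieven[OF True]] by (simp add: vu_def p0_def)
  next
    case False then show ?thesis using someI_ex[OF step[OF that]] by (simp add: vu_def p0_def)
  qed
  have p00: "p0 0 = pa_init A" by (simp add: p0_def p'0)
  have p0u: "p0 (length u) = f" using p'u by (simp add: p0_def)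
  have p0i: "p0 i \<in> pa_final A"
  proof -
    have "i = Suc (i - 1)" using i0 by simp
    then show ?thesis using step_sw[of "i - 1"] ile ieven[of "i - 1"] iodd i0 unfolding p0_def
      by (metis diff_less less_le_trans zero_less_one not_gr_zero)
  qed
  have sum_i: "vsum d (map vu [0..<i]) \<in> pa_constr A"
  proof -
    have "[0..<length u] = [0..<i] @ [i..<length u]" using ile by (intro upt_split) simp_all
    moreover have "map vs' [i..<length u] = replicate (length u - i) (replicate d 0)"
      by (rule nth_equalityI) (auto simp: zero_after)
    moreover have "map vu [0..<i] = map vs' [0..<i]" by (simp add: vu_def)
    ultimately have "map vs' [0..<length u] = map vu [0..<i] @ replicate (length u - i) (replicate d 0)"
      by simp
    then show ?thesis using sumC vsum_zeros by metis
  qed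
  have "\<forall>k. \<exists>r. r 0 = f \<and> (\<forall>t<length (ws k). \<exists>v. (r t, ws k ! t, v, r (Suc t)) \<in> pa_trans A)
           \<and> r (length (ws k)) = f"
    using wsV unfolding Vl_def by blast
  from choice[OF this] obtain R where R: "\<forall>k. R k 0 = f \<and> (\<forall>t<length (ws k). \<exists>v. (R k t, ws k ! t, v, R k (Suc t)) \<in> pa_trans A)
           \<and> R k (length (ws k)) = f" by blast
  have R0: "R k 0 = f" and Rend: "R k (length (ws k)) = f" for k using R by auto
  have Rtr: "\<exists>v. (R k t, ws k ! t, v, R k (Suc t)) \<in> pa_trans A" if "t < length (ws k)" for k t
    using R that by blast
  define s where "s = (\<lambda>k. length u + sum_list (map (length \<circ> ws) [0..<k]))"
  have sSuc: "s (Suc k) = s k + length (ws k)" for k by (simp add: s_def)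
  have smono: "s k < s (Suc k)" for k using wsne[of k] sSuc[of k] by simp
  have sm: "strict_mono s" using smono by (simp add: strict_mono_Suc_iff)
  have s0: "s 0 = length u" by (simp add: s_def)
  have sge: "length u + k \<le> s k" for k
  proof (induction k)
    case 0 then show ?case by (simp add: s0)
  next
    case (Suc k) then show ?case using smono[of k] by simp
  qed
  have sk_ge: "length u \<le> s k" for k using sge[of k] by simp
  define sg where "sg = (\<lambda>n. LEAST k. n < s (Suc k))"
  have sg_eq: "sg n = k" if "s k \<le> n" "n < s (Suc k)" for n k
  proof -
    have a: "n < s (Suc (sg n))" unfolding sg_def using that(2) by (rule LeastI)
    have b: "sg n \<le> k" unfolding sg_def using that(2) by (rule Least_le)
    have "\<not> sg n < k"
    proof
      assume "sg n < k"
      then have "s (Suc (sg n)) \<le> s k" using sm by (simp add: strict_mono_less_eq)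
      then show False using a that(1) by simp
    qed
    then show ?thesis using b by simp
  qed
  have sg_in: "s (sg n) \<le> n \<and> n < s (Suc (sg n))" if "length u \<le> n" for n
  proof -
    have ex: "n < s (Suc n)" using sge[of "Suc n"] by simp
    have a: "n < s (Suc (sg n))" unfolding sg_def using ex by (rule LeastI)
    have "s (sg n) \<le> n"
    proof (cases "sg n")
      case 0 then show ?thesis using s0 that by simp
    next
      case (Suc k)
      then have "k < sg n" by simp
      then have "\<not> n < s (Suc k)" unfolding sg_def by (rule not_less_Least)
      then show ?thesis using Suc by simp
    qed
    then show ?thesis using a by simp
  qed
  define P where "P = (\<lambda>n. if n < length u then p0 n else R (sg n) (n - s (sg n)))"
  have Pseg: "P m = R k (m - s k)" if "s k \<le> m" "m \<le> s (Suc k)" for m k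
  proof (cases "m < s (Suc k)")
    case True
    then have "sg m = k" using sg_eq that(1) by simp
    moreover have "\<not> m < length u" using sk_ge[of k] that(1) by simp
    ultimately show ?thesis by (simp add: P_def)
  next
    case False
    then have m: "m = s (Suc k)" using that(2) by simp
    then have "sg m = Suc k" using sg_eq[of "Suc k" m] smono[of "Suc k"] by simp
    moreover have "\<not> m < length u" using sk_ge[of "Suc k"] m by simp
    ultimately have "P m = f" using m R0 by (simp add: P_def)
    moreover have "m - s k = length (ws k)" using m sSuc[of k] by simp
    ultimately show ?thesis using Rend by simp
  qed
  have Pu: "P m = p0 m" if "m \<le> length u" for m
  proof (cases "m < length u")
    case True then show ?thesis by (simp add: P_def)
  next
    case False
    then have m: "m = length u" using that by simp
    have "P m = R 0 (m - s 0)" using m s0 smono[of 0] by (intro Pseg) simp_all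
    then show ?thesis using m s0 R0 p0u by simp
  qed
  have au: "\<alpha> n = u ! n" if "n < length u" for n by (simp add: adef conc_ow_def that)
  have aw: "\<alpha> n = ws k ! (n - s k)" if "s k \<le> n" "n < s (Suc k)" for n k
  proof -
    have L: "length (concat (map ws [0..<k])) = s k - length u"
      by (simp add: s_def length_concat comp_def)
    have E: "map \<beta> [0..<s (Suc k) - length u] = concat (map ws [0..<k]) @ ws k"
      using wsc[of "Suc k"] by (simp add: s_def)
    have nu: "\<not> n < length u" using sk_ge[of k] that(1) by simp
    have "\<alpha> n = \<beta> (n - length u)" using nu by (simp add: adef conc_ow_def)
    also have "\<dots> = (map \<beta> [0..<s (Suc k) - length u]) ! (n - length u)"
      using that(2) nu by simp
    also have "\<dots> = ws k ! (n - length u - length (concat (map ws [0..<k])))"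
    proof -
      have "\<not> n - length u < length (concat (map ws [0..<k]))" using L that sk_ge[of k] by linarith
      then show ?thesis unfolding E nth_append by (simp only: if_False)
    qed
    also have "n - length u - length (concat (map ws [0..<k])) = n - s k"
      using L that sk_ge[of k] by linarith
    finally show ?thesis .
  qed
  have trP: "\<exists>v. (P n, \<alpha> n, v, P (Suc n)) \<in> pa_trans A" for n
  proof (cases "n < length u")
    case True
    then show ?thesis using tru[OF True] Pu[of n] Pu[of "Suc n"] au[OF True] by auto
  next
    case False
    define k where "k = sg n"
    have sk: "s k \<le> n" "n < s (Suc k)" using sg_in[of n] False by (auto simp: k_def)
    have "P n = R k (n - s k)" using sk by (intro Pseg) simp_all
    moreover have "P (Suc n) = R k (Suc (n - s k))" using sk Pseg[of k "Suc n"] by (simp add: Suc_diff_le)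
    moreover have "\<alpha> n = ws k ! (n - s k)" using aw sk by simp
    moreover have "n - s k < length (ws k)" using sk sSuc[of k] by simp
    ultimately show ?thesis using Rtr by simp
  qed
  define VS where "VS = (\<lambda>n. if n < length u then vu n else SOME v. (P n, \<alpha> n, v, P (Suc n)) \<in> pa_trans A)"
  have trVS: "(P n, \<alpha> n, VS n, P (Suc n)) \<in> pa_trans A" for n
  proof (cases "n < length u")
    case True
    then show ?thesis using tru[OF True] Pu[of n] Pu[of "Suc n"] au[OF True] by (simp add: VS_def)
  next
    case False
    then show ?thesis using someI_ex[OF trP[of n]] by (simp add: VS_def)
  qed
  show ?thesis
    unfolding rpba_accepts_def
  proof (intro exI[of _ P] exI[of _ VS] conjI allI)
    show "P 0 = pa_init A" using Pu[of 0] p00 by simp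
    show "(P n, \<alpha> n, VS n, P (Suc n)) \<in> pa_trans A" for n by (rule trVS)
    have mv: "map VS [0..<i] = map vu [0..<i]" using ile by (simp add: VS_def)
    have "vsum (pa_dim A) (map VS [0..<i]) \<in> pa_constr A" using sum_i unfolding mv d_def .
    then show "\<exists>i\<ge>1. P i \<in> pa_final A \<and> vsum (pa_dim A) (map VS [0..<i]) \<in> pa_constr A"
      using i0 Pu[OF ile] p0i sum_i d_def by (intro exI[of _ i]) auto
    show "\<exists>\<^sub>\<infinity>j. P j \<in> pa_final A"
      unfolding INFM_nat
    proof
      fix m
      have "P (s (Suc m)) = f" using Pseg[of "Suc m" "s (Suc m)"] smono[of "Suc m"] R0 by simp
      moreover have "m < s (Suc m)" using sge[of "Suc m"] by simp
      ultimately show "\<exists>n>m. P n \<in> pa_final A" using fF by auto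
    qed
  qed
qed

theorem lemma8:
  fixes L :: "('a :: finite) oword set"
  assumes "rpba_recognizable L"
  shows "\<exists>n (U :: nat \<Rightarrow> 'a list set) (V :: nat \<Rightarrow> 'a list set).
           (\<forall>i \<in> {1..n}. parikh_recognizable (U i) \<and> regular (V i)) \<and>
           L = (\<Union>i \<in> {1..n}. lang_conc (U i) (omega_iter (V i)))"
proof -
  obtain A :: "'a pa" where wf: "wf_pa A" and LA: "rpba_lang A = L"
    using assms unfolding rpba_recognizable_def by blast
  define N where "N = Max (pa_states A)"
  have finQ: "finite (pa_states A)" using wf unfolding wf_pa_def by blast
  have FQ: "pa_final A \<subseteq> pa_states A" using wf unfolding wf_pa_def by blast
  have P1: "\<forall>i \<in> {1..Suc N}. parikh_recognizable (pa_lang (phA A (i - 1))) \<and> regular (Vl A (i - 1))"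
    using wf_phA[OF wf] regular_Vl[OF wf] unfolding parikh_recognizable_def by blast
  have P2: "L = (\<Union>i \<in> {1..Suc N}. lang_conc (pa_lang (phA A (i - 1))) (omega_iter (Vl A (i - 1))))"
  proof
    show "L \<subseteq> (\<Union>i \<in> {1..Suc N}. lang_conc (pa_lang (phA A (i - 1))) (omega_iter (Vl A (i - 1))))"
    proof
      fix \<alpha> assume "\<alpha> \<in> L"
      then have "rpba_accepts A \<alpha>" using LA unfolding rpba_lang_def by blast
      then obtain f where fF: "f \<in> pa_final A"
        and m: "\<alpha> \<in> lang_conc (pa_lang (phA A f)) (omega_iter (Vl A f))"
        using dirA[OF wf] by blast
      have "f \<le> N" unfolding N_def using fF FQ finQ by (simp add: Max_ge subset_iff)
      then have "Suc f \<in> {1..Suc N}" by simp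
      moreover have "\<alpha> \<in> lang_conc (pa_lang (phA A (Suc f - 1))) (omega_iter (Vl A (Suc f - 1)))"
        using m by simp
      ultimately show "\<alpha> \<in> (\<Union>i \<in> {1..Suc N}. lang_conc (pa_lang (phA A (i - 1))) (omega_iter (Vl A (i - 1))))"
        by blast
    qed
  next
    show "(\<Union>i \<in> {1..Suc N}. lang_conc (pa_lang (phA A (i - 1))) (omega_iter (Vl A (i - 1)))) \<subseteq> L"
      using dirB[OF wf] LA unfolding rpba_lang_def by blast
  qed
  show ?thesis
    apply (rule exI[of _ "Suc N"], rule exI[of _ "\<lambda>i. pa_lang (phA A (i - 1))"],
        rule exI[of _ "\<lambda>i. Vl A (i - 1)"])
    using P1 P2 by (intro conjI) simp_all
qed

end
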